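(* Let $p\in[0,1]^N$. If $i\in\{\tilde k+1,\dots,N\}$, then $B^{\mathcal N}_{1:i}\le i-1$. In particular, if $\tilde k\le N-1$, then $B^{\mathcal N}_{1:\tilde k+1}=\tilde k$.
   Context: $q\in(0,1)$, $N\ge1$. Bins $B_i=\{x:(i-1)q/N\le x<iq/N\}$ for $i=1,\dots,N$. $B^{\mathcal N}_{1:i}=|\{j\in\{1,\dots,N\}:0\le p_j<iq/N\}|$ (with $B^{\mathcal N}_{1:0}=0$), and $\tilde k=\max\{i\in\{0,\dots,N\}:B^{\mathcal N}_{1:i}=i\}$ is the Benjamini–Hochberg rejection count. *)

theory Defs
  imports Main "HOL.Real"
begin

definition BN :: "real \<Rightarrow> nat \<Rightarrow> (nat \<Rightarrow> real) \<Rightarrow> nat \<Rightarrow> nat" where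
  "BN q N p i = card {j \<in> {1..N}. 0 \<le> p j \<and> p j < real i * q / real N}"

definition k_tilde :: "real \<Rightarrow> nat \<Rightarrow> (nat \<Rightarrow> real) \<Rightarrow> nat" where
  "k_tilde q N p = Max {i \<in> {0..N}. BN q N p i = i}"

end

theory Submission
  imports Defs
begin

lemma BN_mono:
  assumes "0 < q" "i \<le> i'"
  shows "BN q N p i \<le> BN q N p i'"
proof -
  have "real i * q / real N \<le> real i' * q / real N"
    using assms by (intro divide_right_mono mult_right_mono) auto
  then show ?thesis unfolding BN_def
    by (intro card_mono) auto
qed

lemma BN_le: "BN q N p i \<le> N"
proof -
  have "BN q N p i \<le> card {1..N}" unfolding BN_def by (intro card_mono) auto
  then show ?thesis by simp
qed

lemma BN_0: "BN q N p 0 = 0"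
  unfolding BN_def by simp

lemma ivt:
  assumes "0 < q"
  shows "BN q N p j \<ge> j \<Longrightarrow> \<exists>j'\<in>{j..N}. BN q N p j' = j'"
proof (induction "N - j" arbitrary: j)
  case 0
  then have "j \<ge> N" by simp
  with BN_le[of q N p j] 0 have "BN q N p j = j" "j = N" by linarith+
  then show ?case by auto
next
  case (Suc m)
  show ?case
  proof (cases "BN q N p j = j")
    case True
    with Suc show ?thesis using BN_le[of q N p j] by auto
  next
    case False
    with Suc have gt: "BN q N p j > j" by simp
    with BN_le[of q N p j] have "j < N" by linarith
    have "BN q N p (j+1) \<ge> j + 1" using BN_mono[OF assms, of j "j+1" N p] gt by simp
    moreover have "m = N - (j+1)" using Suc(2) by simp
    ultimately obtain j' where "j'\<in>{j+1..N}" "BN q N p j' = j'" using Suc(1)[of "j+1"] by auto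
    then show ?thesis by auto
  qed
qed

theorem lemma3:
  fixes q :: real and N :: nat and p :: "nat \<Rightarrow> real"
  assumes "0 < q" and "q < 1" and "N \<ge> 1"
    and "\<forall>j\<in>{1..N}. 0 \<le> p j \<and> p j \<le> 1"
  shows "(\<forall>i\<in>{k_tilde q N p + 1..N}. BN q N p i \<le> i - 1)
     \<and> (k_tilde q N p \<le> N - 1 \<longrightarrow> BN q N p (k_tilde q N p + 1) = k_tilde q N p)"
proof -
  define S where "S = {i \<in> {0..N}. BN q N p i = i}"
  have fin: "finite S" unfolding S_def by simp
  have "0 \<in> S" unfolding S_def using BN_0 by simp
  then have ne: "S \<noteq> {}" by auto
  define k where "k = k_tilde q N p"
  have kS: "k \<in> S" unfolding k_def k_tilde_def S_def[symmetric] using Max_in[OF fin ne] .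
  have kmax: "\<And>i. i \<in> S \<Longrightarrow> i \<le> k" unfolding k_def k_tilde_def S_def[symmetric]
    using Max_ge[OF fin] by blast
  have A: "BN q N p i \<le> i - 1" if "i \<in> {k+1..N}" for i
  proof (rule ccontr)
    assume "\<not> BN q N p i \<le> i - 1"
    then have "BN q N p i \<ge> i" by linarith
    from ivt[OF assms(1) this] obtain j where "j \<in> {i..N}" "BN q N p j = j" by auto
    then have "j \<in> S" unfolding S_def by auto
    with kmax have "j \<le> k" by auto
    with \<open>j \<in> {i..N}\<close> that show False by auto
  qed
  have B: "BN q N p (k+1) = k" if "k \<le> N - 1"
  proof -
    have "BN q N p (k+1) \<le> k" using A[of "k+1"] that assms(3) by auto
    moreover have "BN q N p k = k" using kS unfolding S_def by auto
    moreover have "BN q N p k \<le> BN q N p (k+1)" using BN_mono[OF assms(1)] by simp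
    ultimately show ?thesis by linarith
  qed
  show ?thesis using A B unfolding k_def by blast
qed

end
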